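(* Let $\mathfrak{A}$ be a $\sigma$-algebra represented as $\mathfrak{A}=\mathfrak{A}(M)/\mathcal{I}$, with $\mathfrak{A}(M)$ a $\sigma$-algebra of subsets of a nonempty set $M$ and $\mathcal{I}$ a $\sigma$-ideal in $\mathfrak{A}(M)$. Up to the canonical homeomorphism between $\mathcal{Q}(\mathfrak{A})$ and the Gelfand spectrum of the abelian $C^\ast$-algebra $\mathcal{F}_{\mathfrak{A}(M)}(M,\mathbb{C})/\mathcal{F}(\mathcal{I})$, the Gelfand transformation of $\mathcal{F}_{\mathfrak{A}(M)}(M,\mathbb{C})/\mathcal{F}(\mathcal{I})$ restricted to its selfadjoint part $\mathcal{F}_{\mathfrak{A}(M)}(M,\mathbb{R})/\mathcal{F}_{\mathbb{R}}(\mathcal{I})$ is the map \[ \Gamma:\mathcal{F}_{\mathfrak{A}(M)}(M,\mathbb{R})/\mathcal{F}_{\mathbb{R}}(\mathcal{I})\to C(\mathcal{Q}(\mathfrak{A}),\mathbb{R}),\qquad [\varphi]\mapsto f_{E^{[\varphi]}}. \] Moreover, if $\mathcal{Q}(\mathfrak{A})$ is identified with $\mathcal{Q}^{\mathcal{I}}(\mathfrak{A}(M))$, then $f_{E^{[\varphi]}}=f_{E^\varphi}|_{\mathcal{Q}^{\mathcal{I}}(\mathfrak{A}(M))}$, where $\varphi\mapsto f_{E^\varphi}$ is the Gelfand transformation on $\mathcal{F}_{\mathfrak{A}(M)}(M,\mathbb{R})$ (via $\mathcal{Q}(\mathfrak{A}(M))\cong\Omega(\mathcal{F}_{\mathfr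ak{A}(M)}(M,\mathbb{C}))$).
   Context: $\mathcal{F}_{\mathfrak{A}(M)}(M,\mathbb{C})$ is the $C^\ast$-algebra of bounded $\mathfrak{A}(M)$-measurable functions $M\to\mathbb{C}$ (sup norm), $\mathcal{F}_{\mathfrak{A}(M)}(M,\mathbb{R})$ its real-valued elements, $\mathcal{F}(\mathcal{I})$ the closed ideal of those functions vanishing outside some $A\in\mathcal{I}$, and $\mathcal{F}_{\mathbb{R}}(\mathcal{I})=\mathcal{F}_{\mathfrak{A}(M)}(M,\mathbb{R})\cap\mathcal{F}(\mathcal{I})$. For a $\sigma$-complete lattice $\mathbb{L}$ (with $0,1$), a spectral family is a map $E:\mathbb{R}\to\mathbb{L}$ with $E_\lambda\le E_\mu$ ($\lambda\le\mu$), $E_\lambda=\bigwedge_{\mu>\lambda}E_\mu$, $\bigwedge_\lambda E_\lambda=0$, $\bigvee_\lambda E_\lambda=1$; quasipoints are maximal dual ideals (maximal nonempty upward closed subsets not containing $0$ and closed under finite meets); the Stone spectrum $\mathcal{Q}(\mathbb{L})$ is the set of quasipoints with the topology generated by $\{\mathfrak{B}\mid a\in\mathfrak{B}\}$, $a\in\mathbb{L}$; for a bounded spectral family $E$, $f_E(\mathfrak{B}):=\inf\{\lambda\mid E_\lambda\in\mathfrak{B}\}$. For $\varphi\in\mathcal{F}_{\mathfrak{A}(M)}(M,\mathbb{R})$, $E^\varphi_\lambda:=\varphi^{-1}(]-\infty,\lambda])$ and $E^{[\varphi]}_\lambda:=[E^\varphi_\lambda]\in\mathfrak{A}$ (class modulo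 $\mathcal{I}$); $E^{[\varphi]}$ depends only on $[\varphi]$ and is a spectral family in $\mathfrak{A}$. With $\mathcal{I}^\perp=\{M\setminus A\mid A\in\mathcal{I}\}$, $\mathcal{Q}^{\mathcal{I}}(\mathfrak{A}(M)):=\{\mathfrak{B}\in\mathcal{Q}(\mathfrak{A}(M))\mid\mathcal{I}^\perp\subseteq\mathfrak{B}\}$, identified with $\mathcal{Q}(\mathfrak{A})$ via $\mathfrak{B}\mapsto\{[A]\mid A\in\mathfrak{B}\}$ (so that $[A]$ lies in the image iff any representative $A$ lies in $\mathfrak{B}$). It is known that $\mathcal{Q}(\mathfrak{A})$ is canonically homeomorphic to the Gelfand spectrum of $\mathcal{F}_{\mathfrak{A}(M)}(M,\mathbb{C})/\mathcal{F}(\mathcal{I})$. *)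

theory Defs
  imports "HOL-Analysis.Analysis"
begin

text \<open>A lattice is given by a carrier L, an order le, a binary meet and a bottom element.\<close>

definition dual_ideal ::
  "'b set \<Rightarrow> ('b \<Rightarrow> 'b \<Rightarrow> bool) \<Rightarrow> ('b \<Rightarrow> 'b \<Rightarrow> 'b) \<Rightarrow> 'b \<Rightarrow> 'b set \<Rightarrow> bool" where
  "dual_ideal L le meet z0 D \<longleftrightarrow>
     D \<subseteq> L \<and> D \<noteq> {} \<and> z0 \<notin> D \<and>
     (\<forall>a\<in>D. \<forall>b\<in>L. le a b \<longrightarrow> b \<in> D) \<and>
     (\<forall>a\<in>D. \<forall>b\<in>D. meet a b \<in> D)"

definition quasipoint ::
  "'b set \<Rightarrow> ('b \<Rightarrow> 'b \<Rightarrow> bool) \<Rightarrow> ('b \<Rightarrow> 'b \<Rightarrow> 'b) \<Rightarrow> 'b \<Rightarrow> 'b set \<Rightarrow> bool" where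
  "quasipoint L le meet z0 D \<longleftrightarrow>
     dual_ideal L le meet z0 D \<and>
     (\<forall>D'. dual_ideal L le meet z0 D' \<and> D \<subseteq> D' \<longrightarrow> D' = D)"

definition stone_spectrum ::
  "'b set \<Rightarrow> ('b \<Rightarrow> 'b \<Rightarrow> bool) \<Rightarrow> ('b \<Rightarrow> 'b \<Rightarrow> 'b) \<Rightarrow> 'b \<Rightarrow> 'b set topology" where
  "stone_spectrum L le meet z0 =
     topology_generated_by
       ((\<lambda>a. {B. quasipoint L le meet z0 B \<and> a \<in> B}) ` L)"

definition obs_fun :: "(real \<Rightarrow> 'b) \<Rightarrow> 'b set \<Rightarrow> real" where
  "obs_fun E B = Inf {t. E t \<in> B}"

section \<open>The sigma-algebra setting (M is the universe of type 'a)\<close>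

definition sigma_ideal :: "'a set set \<Rightarrow> 'a set set \<Rightarrow> bool" where
  "sigma_ideal S I \<longleftrightarrow>
     I \<subseteq> S \<and> {} \<in> I \<and>
     (\<forall>A\<in>I. \<forall>B\<in>S. B \<subseteq> A \<longrightarrow> B \<in> I) \<and>
     (\<forall>F::nat \<Rightarrow> 'a set. range F \<subseteq> I \<longrightarrow> (\<Union>n. F n) \<in> I)"

definition cls :: "'a set set \<Rightarrow> 'a set set \<Rightarrow> 'a set \<Rightarrow> 'a set set" where
  "cls S I A = {B\<in>S. (A - B) \<union> (B - A) \<in> I}"

definition qcarrier :: "'a set set \<Rightarrow> 'a set set \<Rightarrow> 'a set set set" where
  "qcarrier S I = cls S I ` S"

definition qle :: "'a set set \<Rightarrow> 'a set set \<Rightarrow> 'a set set \<Rightarrow> bool" where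
  "qle I X Y \<longleftrightarrow> (\<exists>A\<in>X. \<exists>B\<in>Y. A - B \<in> I)"

definition qmeet :: "'a set set \<Rightarrow> 'a set set \<Rightarrow> 'a set set \<Rightarrow> 'a set set \<Rightarrow> 'a set set" where
  "qmeet S I X Y = cls S I ((SOME A. A \<in> X) \<inter> (SOME B. B \<in> Y))"

definition qbot :: "'a set set \<Rightarrow> 'a set set \<Rightarrow> 'a set set" where
  "qbot S I = cls S I {}"

abbreviation quasipoint_quot :: "'a set set \<Rightarrow> 'a set set \<Rightarrow> 'a set set set \<Rightarrow> bool" where
  "quasipoint_quot S I B \<equiv> quasipoint (qcarrier S I) (qle I) (qmeet S I) (qbot S I) B"

abbreviation stone_quot :: "'a set set \<Rightarrow> 'a set set \<Rightarrow> 'a set set set topology" where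
  "stone_quot S I \<equiv> stone_spectrum (qcarrier S I) (qle I) (qmeet S I) (qbot S I)"

abbreviation quasipoint_set :: "'a set set \<Rightarrow> 'a set set \<Rightarrow> bool" where
  "quasipoint_set S B \<equiv> quasipoint S (\<subseteq>) (\<inter>) {} B"

definition spec_fam :: "('a \<Rightarrow> real) \<Rightarrow> real \<Rightarrow> 'a set" where
  "spec_fam \<phi> t = {x. \<phi> x \<le> t}"

definition spec_fam_quot :: "'a set set \<Rightarrow> 'a set set \<Rightarrow> ('a \<Rightarrow> real) \<Rightarrow> real \<Rightarrow> 'a set set" where
  "spec_fam_quot S I \<phi> t = cls S I (spec_fam \<phi> t)"

definition measurable_wrt :: "'a set set \<Rightarrow> ('a \<Rightarrow> 'c::topological_space) \<Rightarrow> bool" where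
  "measurable_wrt S f \<longleftrightarrow> (\<forall>U. open U \<longrightarrow> f -` U \<in> S)"

definition Fmeas :: "'a set set \<Rightarrow> ('a \<Rightarrow> 'c::real_normed_vector) set" where
  "Fmeas S = {f. measurable_wrt S f \<and> bounded (range f)}"

definition Fideal :: "'a set set \<Rightarrow> 'a set set \<Rightarrow> ('a \<Rightarrow> 'c::real_normed_vector) set" where
  "Fideal S I = {f\<in>Fmeas S. \<exists>A\<in>I. \<forall>x. x \<notin> A \<longrightarrow> f x = 0}"

definition fcls :: "'a set set \<Rightarrow> 'a set set \<Rightarrow> ('a \<Rightarrow> complex) \<Rightarrow> ('a \<Rightarrow> complex) set" where
  "fcls S I f = {g\<in>Fmeas S. (\<lambda>x. g x - f x) \<in> Fideal S I}"

text \<open>Gelfand spectrum of the quotient algebra: nonzero multiplicative linear functionals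
  on F_{A(M)}(M,C)/F(I) (operations computed on representatives).\<close>
definition quot_character ::
  "'a set set \<Rightarrow> 'a set set \<Rightarrow> (('a \<Rightarrow> complex) set \<Rightarrow> complex) \<Rightarrow> bool" where
  "quot_character S I ch \<longleftrightarrow>
     (\<forall>f\<in>Fmeas S. \<forall>g\<in>Fmeas S.
        ch (fcls S I (\<lambda>x. f x + g x)) = ch (fcls S I f) + ch (fcls S I g) \<and>
        ch (fcls S I (\<lambda>x. f x * g x)) = ch (fcls S I f) * ch (fcls S I g)) \<and>
     (\<forall>f\<in>Fmeas S. \<forall>c::complex. ch (fcls S I (\<lambda>x. c * f x)) = c * ch (fcls S I f)) \<and>
     (\<exists>f\<in>Fmeas S. ch (fcls S I f) \<noteq> 0)"

end

theory Submission
  imports Defs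
begin

locale qsetup =
  fixes S I :: "'a set set"
  assumes sa: "sigma_algebra (UNIV::'a set) S" and si: "sigma_ideal S I"
begin

lemma SUn[intro]: "A\<in>S \<Longrightarrow> B\<in>S \<Longrightarrow> A\<union>B \<in> S"
  using sa by (meson sigma_algebra_def algebra_def ring_of_sets.Un)
lemma SDiff[intro]: "A\<in>S \<Longrightarrow> B\<in>S \<Longrightarrow> A-B \<in> S"
  using sa by (meson sigma_algebra_def algebra_def ring_of_sets.Diff)
lemma SUNIV[intro]: "UNIV \<in> S"
  using sa by (meson sigma_algebra_def algebra.top)
lemma Sempty[intro]: "{} \<in> S"
  using SDiff[OF SUNIV SUNIV] by simp
lemma SInt[intro]: "A\<in>S \<Longrightarrow> B\<in>S \<Longrightarrow> A\<inter>B \<in> S"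
  using SDiff[of A "A - B"] SDiff[of A B] by (simp add: Diff_Diff_Int)
lemma Scompl[intro]: "A\<in>S \<Longrightarrow> -A \<in> S"
  using SDiff[OF SUNIV, of A] by (simp add: Compl_eq_Diff_UNIV)

lemma I_S: "A\<in>I \<Longrightarrow> A\<in>S" using si unfolding sigma_ideal_def by blast
lemma I_empty[intro]: "{}\<in>I" using si unfolding sigma_ideal_def by blast
lemma I_sub: "A\<in>I \<Longrightarrow> B\<in>S \<Longrightarrow> B\<subseteq>A \<Longrightarrow> B\<in>I" using si unfolding sigma_ideal_def by blast
lemma I_Un[intro]: assumes "A\<in>I" "B\<in>I" shows "A\<union>B\<in>I"
proof -
  let ?F = "\<lambda>n::nat. if n = 0 then A else B"
  have "range ?F \<subseteq> I" using assms by auto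
  hence "(\<Union>n. ?F n) \<in> I" using si unfolding sigma_ideal_def by blast
  moreover have "(\<Union>n. ?F n) = A \<union> B"
    by (auto split: if_splits)
  ultimately show ?thesis by simp
qed
lemma I_sub2: "B\<in>S \<Longrightarrow> B \<subseteq> A1 \<union> A2 \<Longrightarrow> A1\<in>I \<Longrightarrow> A2\<in>I \<Longrightarrow> B\<in>I"
  by (meson I_Un I_sub)



lemma cls_mem: "P \<in> cls S I A \<longleftrightarrow> P \<in> S \<and> sym_diff A P \<in> I"
  unfolding cls_def by simp
lemma cls_self: "A\<in>S \<Longrightarrow> A \<in> cls S I A"
  unfolding cls_def by auto

lemma sd_trans: "A\<in>S \<Longrightarrow> B\<in>S \<Longrightarrow> C\<in>S \<Longrightarrow> sym_diff A B \<in> I \<Longrightarrow> sym_diff B C \<in> I \<Longrightarrow> sym_diff A C \<in> I"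
  by (rule I_sub2[of _ "sym_diff A B" "sym_diff B C"]) auto
lemma sd_sym: "sym_diff A B \<in> I \<Longrightarrow> sym_diff B A \<in> I" by (simp add: Un_commute)

lemma cls_eq_iff: assumes "A\<in>S" "C\<in>S" shows "cls S I A = cls S I C \<longleftrightarrow> sym_diff A C \<in> I"
proof
  assume "cls S I A = cls S I C"
  then have "C \<in> cls S I A" using cls_self[OF assms(2)] by simp
  thus "sym_diff A C \<in> I" by (simp add: cls_mem)
next
  assume h: "sym_diff A C \<in> I"
  show "cls S I A = cls S I C"
    unfolding cls_def using h assms sd_trans sd_sym by blast
qed

lemma I_sub4: "B\<in>S \<Longrightarrow> B \<subseteq> A1 \<union> A2 \<union> A3 \<union> A4 \<Longrightarrow> A1\<in>I \<Longrightarrow> A2\<in>I \<Longrightarrow> A3\<in>I \<Longrightarrow> A4\<in>I \<Longrightarrow> B\<in>I"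
  by (meson I_Un I_sub)

lemma cls_some: assumes "A\<in>S" shows "(SOME P. P \<in> cls S I A) \<in> cls S I A"
  using cls_self[OF assms] by (rule someI)

lemma qmeet_cls: assumes "A\<in>S" "C\<in>S" shows "qmeet S I (cls S I A) (cls S I C) = cls S I (A\<inter>C)"
proof -
  define A' where "A' = (SOME P. P \<in> cls S I A)"
  define C' where "C' = (SOME P. P \<in> cls S I C)"
  have a: "A' \<in> S" "sym_diff A A' \<in> I" using cls_some[OF assms(1)] unfolding A'_def cls_mem by auto
  have c: "C' \<in> S" "sym_diff C C' \<in> I" using cls_some[OF assms(2)] unfolding C'_def cls_mem by auto
  have "sym_diff (A'\<inter>C') (A\<inter>C) \<in> I"
    by (rule I_sub2[of _ "sym_diff A A'" "sym_diff C C'"]) (use a c assms in auto)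
  hence "cls S I (A'\<inter>C') = cls S I (A\<inter>C)" using a c assms by (subst cls_eq_iff) auto
  thus ?thesis unfolding qmeet_def A'_def C'_def .
qed

lemma qle_cls: assumes "A\<in>S" "C\<in>S" shows "qle I (cls S I A) (cls S I C) \<longleftrightarrow> A - C \<in> I"
proof
  assume "qle I (cls S I A) (cls S I C)"
  then obtain P Q where p: "P \<in> cls S I A" and q: "Q \<in> cls S I C" and pq: "P - Q \<in> I"
    unfolding qle_def by blast
  show "A - C \<in> I"
    by (rule I_sub4[of _ "sym_diff A P" "P - Q" "sym_diff C Q" "{}"]) (use p q pq assms in \<open>auto simp: cls_mem\<close>)
next
  assume "A - C \<in> I" thus "qle I (cls S I A) (cls S I C)"
    unfolding qle_def using cls_self assms by blast
qed

lemma qcarrier_iff: "X \<in> qcarrier S I \<longleftrightarrow> (\<exists>A\<in>S. X = cls S I A)"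
  unfolding qcarrier_def by auto

context
  fixes B assumes qp: "quasipoint_quot S I B"
begin

lemma qp_di: "dual_ideal (qcarrier S I) (qle I) (qmeet S I) (qbot S I) B"
  using qp unfolding quasipoint_def by blast

lemma qp_rep: "X \<in> B \<Longrightarrow> \<exists>A\<in>S. X = cls S I A"
  using qp_di unfolding dual_ideal_def qcarrier_iff[symmetric] by blast

lemma qp_bot: "cls S I {} \<notin> B"
  using qp_di unfolding dual_ideal_def qbot_def by blast

lemma qp_up: assumes "cls S I A \<in> B" "A\<in>S" "C\<in>S" "A - C \<in> I" shows "cls S I C \<in> B"
proof -
  have "qle I (cls S I A) (cls S I C)" using qle_cls assms by blast
  moreover have "cls S I C \<in> qcarrier S I" using assms qcarrier_iff by blast
  ultimately show ?thesis using qp_di assms(1) unfolding dual_ideal_def by blast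
qed

lemma qp_meet: assumes "cls S I A \<in> B" "cls S I C \<in> B" "A\<in>S" "C\<in>S" shows "cls S I (A\<inter>C) \<in> B"
  using qp_di assms qmeet_cls[OF assms(3,4)] unfolding dual_ideal_def by metis

lemma qp_univ: "cls S I UNIV \<in> B"
proof -
  obtain X where "X \<in> B" using qp_di unfolding dual_ideal_def by blast
  then obtain A where "A\<in>S" "cls S I A \<in> B" using qp_rep by blast
  thus ?thesis using qp_up[of A UNIV] by auto
qed

lemma qp_notI: assumes "cls S I A \<in> B" "A \<in> S" shows "A \<notin> I"
proof
  assume "A \<in> I"
  hence "cls S I A = cls S I {}" using assms by (subst cls_eq_iff) auto
  thus False using assms qp_bot by simp
qed

lemma qp_ne: assumes "cls S I A \<in> B" "A \<in> S" shows "A \<noteq> {}"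
  using qp_notI[OF assms] by auto

lemma qp_ultra: assumes A: "A\<in>S" "cls S I A \<notin> B" shows "cls S I (-A) \<in> B"
proof -
  have "\<exists>D\<in>S. cls S I D \<in> B \<and> D \<inter> A \<in> I"
  proof (rule ccontr)
    assume H0: "\<not> ?thesis"
    hence H: "\<And>D. D\<in>S \<Longrightarrow> cls S I D \<in> B \<Longrightarrow> D \<inter> A \<notin> I" by blast
    define D' where "D' = {Y. \<exists>C\<in>S. Y = cls S I C \<and> (\<exists>D\<in>S. cls S I D \<in> B \<and> (D \<inter> A) - C \<in> I)}"
    have "dual_ideal (qcarrier S I) (qle I) (qmeet S I) (qbot S I) D'"
      unfolding dual_ideal_def
    proof (intro conjI ballI impI)
      show "D' \<subseteq> qcarrier S I" unfolding D'_def using qcarrier_iff by blast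
      have "UNIV \<inter> A - UNIV \<in> I" using I_empty by simp
      hence "cls S I UNIV \<in> D'" unfolding D'_def using qp_univ SUNIV I_empty by (intro CollectI bexI[of _ UNIV] conjI) auto
      thus "D' \<noteq> {}" by blast
      show "qbot S I \<notin> D'"
      proof
        assume "qbot S I \<in> D'"
        then obtain C D where C: "C\<in>S" "cls S I {} = cls S I C" and D: "D\<in>S" "cls S I D \<in> B" "(D \<inter> A) - C \<in> I"
          unfolding D'_def qbot_def by blast
        have "C \<in> I" using C cls_eq_iff[of "{}" C] by auto
        hence "D \<inter> A \<in> I" by (intro I_sub2[of "D \<inter> A" "(D \<inter> A) - C" C]) (use D A in auto)
        thus False using H D by blast
      qed
      fix a b assume a: "a \<in> D'" and b: "b \<in> qcarrier S I" and ab: "qle I a b"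
      then obtain C D where C: "C\<in>S" "a = cls S I C" and D: "D\<in>S" "cls S I D \<in> B" "(D \<inter> A) - C \<in> I"
        unfolding D'_def by blast
      obtain C' where C': "C' \<in> S" "b = cls S I C'" using b qcarrier_iff by blast
      have "C - C' \<in> I" using ab C C' qle_cls by blast
      hence "(D \<inter> A) - C' \<in> I" by (intro I_sub2[of "(D \<inter> A) - C'" "(D \<inter> A) - C" "C - C'"]) (use D C C' A in auto)
      thus "b \<in> D'" unfolding D'_def using C' D by blast
    next
      fix a b assume a: "a \<in> D'" and b: "b \<in> D'"
      then obtain C1 D1 where C1: "C1\<in>S" "a = cls S I C1" and D1: "D1\<in>S" "cls S I D1 \<in> B" "(D1 \<inter> A) - C1 \<in> I"
        unfolding D'_def by blast
      obtain C2 D2 where C2: "C2\<in>S" "b = cls S I C2" and D2: "D2\<in>S" "cls S I D2 \<in> B" "(D2 \<inter> A) - C2 \<in> I"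
        using b unfolding D'_def by blast
      have m: "qmeet S I a b = cls S I (C1 \<inter> C2)" using qmeet_cls C1 C2 by simp
      have "cls S I (D1 \<inter> D2) \<in> B" using qp_meet D1 D2 by blast
      moreover have "(D1 \<inter> D2 \<inter> A) - (C1 \<inter> C2) \<in> I"
        by (intro I_sub2[of "(D1 \<inter> D2 \<inter> A) - (C1 \<inter> C2)" "(D1 \<inter> A) - C1" "(D2 \<inter> A) - C2"]) (use D1 D2 C1 C2 A in auto)
      ultimately show "qmeet S I a b \<in> D'" unfolding D'_def m using C1 C2 D1 D2 by blast
    qed
    moreover have "B \<subseteq> D'"
    proof
      fix X assume "X \<in> B"
      then obtain C where "C\<in>S" "X = cls S I C" using qp_rep by blast
      moreover have "C \<inter> A - C \<in> I" using I_empty by (metis Diff_eq_empty_iff inf_le1)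
      ultimately show "X \<in> D'" unfolding D'_def using \<open>X \<in> B\<close> I_empty
        by (intro CollectI bexI[of _ C] conjI) (auto intro!: bexI[of _ C])
    qed
    ultimately have "D' = B" using qp unfolding quasipoint_def by (elim conjE allE[of _ D']) simp
    moreover have "cls S I A \<in> D'"
    proof -
      have "UNIV \<inter> A - A \<in> I" using I_empty by simp
      thus ?thesis unfolding D'_def using A(1) qp_univ SUNIV by blast
    qed
    ultimately show False using A by blast
  qed
  then obtain D where D: "D\<in>S" "cls S I D \<in> B" "D \<inter> A \<in> I" by blast
  have "D - (-A) = D \<inter> A" by blast
  thus ?thesis using qp_up[of D "-A"] D A by auto
qed

lemma qp_compl: assumes "cls S I A \<in> B" "A \<in> S" shows "cls S I (-A) \<notin> B"
proof
  assume "cls S I (-A) \<in> B"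
  hence "cls S I (A \<inter> -A) \<in> B" using qp_meet assms by blast
  thus False using qp_bot by simp
qed

end

lemma sets_MS[simp]: "sets (sigma UNIV S) = S" using sigma_algebra.sets_measure_of_eq[OF sa] by simp
lemma space_MS[simp]: "space (sigma UNIV S) = UNIV" using sigma_algebra.space_measure_of_eq[OF sa] by simp

lemma meas_iff: "measurable_wrt S f \<longleftrightarrow> f \<in> borel_measurable (sigma UNIV S)"
proof
  assume "measurable_wrt S f"
  thus "f \<in> borel_measurable (sigma UNIV S)"
    unfolding measurable_wrt_def by (intro borel_measurableI) simp
next
  assume h: "f \<in> borel_measurable (sigma UNIV S)"
  show "measurable_wrt S f" unfolding measurable_wrt_def
  proof (intro allI impI)
    fix U :: "'b set" assume "open U"
    from measurable_sets[OF h borel_open[OF this]] show "f -` U \<in> S" by simp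
  qed
qed

lemma Fmeas_iff: "f \<in> Fmeas S \<longleftrightarrow> f \<in> borel_measurable (sigma UNIV S) \<and> bounded (range f)"
  unfolding Fmeas_def meas_iff by simp

lemma Fmeas_bound: assumes "f \<in> Fmeas S" obtains K where "K > 0" "\<And>x. norm (f x) \<le> K"
proof -
  obtain a where "\<forall>x. norm (f x) \<le> a" using assms unfolding Fmeas_def bounded_iff by auto
  hence "\<And>x. norm (f x) \<le> max a 1" by (meson max.coboundedI1)
  thus ?thesis using that[of "max a 1"] by simp
qed

lemma spec_fam_S: assumes "\<phi> \<in> Fmeas S" shows "spec_fam \<phi> t \<in> S"
proof -
  have m: "\<phi> \<in> borel_measurable (sigma UNIV S)" using assms Fmeas_iff by blast
  have "\<phi> -` {..t} \<inter> space (sigma UNIV S) \<in> sets (sigma UNIV S)"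
    by (rule measurable_sets[OF m]) simp
  moreover have "\<phi> -` {..t} \<inter> space (sigma UNIV S) = spec_fam \<phi> t" unfolding spec_fam_def by auto
  ultimately show ?thesis by simp
qed

context
  fixes B assumes qp: "quasipoint_quot S I B"
begin

context
  fixes \<phi> :: "'a \<Rightarrow> real" assumes phi: "\<phi> \<in> Fmeas S"
begin

definition "TT = {t. spec_fam_quot S I \<phi> t \<in> B}"

lemma TT_up: "t \<in> TT \<Longrightarrow> t \<le> s \<Longrightarrow> s \<in> TT"
  unfolding TT_def spec_fam_quot_def mem_Collect_eq
proof (rule qp_up[OF qp, of "spec_fam \<phi> t"])
  assume "t \<le> s"
  hence "spec_fam \<phi> t - spec_fam \<phi> s = {}" unfolding spec_fam_def by auto
  thus "spec_fam \<phi> t - spec_fam \<phi> s \<in> I" using I_empty by (simp only:)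
qed (auto simp: spec_fam_S[OF phi])

lemma TT_props: "\<exists>K. K \<in> TT \<and> (\<forall>t\<in>TT. -K \<le> t)"
proof -
  obtain K where K: "K > 0" "\<And>x. norm (\<phi> x) \<le> K" using Fmeas_bound[OF phi] by blast
  have "spec_fam \<phi> K = UNIV" using K unfolding spec_fam_def by (auto simp: abs_le_iff)
  hence "K \<in> TT" unfolding TT_def spec_fam_quot_def using qp_univ[OF qp] by simp
  moreover have "-K \<le> t" if "t \<in> TT" for t
  proof (rule ccontr)
    assume "\<not> -K \<le> t"
    hence "spec_fam \<phi> t = {}" using K unfolding spec_fam_def
      by (smt (verit, best) empty_Collect_eq real_norm_def)
    thus False using that qp_bot[OF qp] unfolding TT_def spec_fam_quot_def by simp
  qed
  ultimately show ?thesis by blast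
qed

lemma TT_ne: "TT \<noteq> {}" using TT_props by blast
lemma TT_bdd: "bdd_below TT" using TT_props unfolding bdd_below_def by blast

lemma obs_eq: "obs_fun (spec_fam_quot S I \<phi>) B = Inf TT"
  unfolding obs_fun_def TT_def by simp

lemma obs_lower: "t \<in> TT \<Longrightarrow> Inf TT \<le> t" using cInf_lower TT_bdd by blast
lemma obs_less: "Inf TT < t \<Longrightarrow> t \<in> TT" using cInf_lessD[OF TT_ne] TT_up by force
lemma obs_notin: "t < Inf TT \<Longrightarrow> t \<notin> TT" using obs_lower by force

lemma obs_approx: assumes "e > 0"
  shows "\<exists>A\<in>S. cls S I A \<in> B \<and> (\<forall>x\<in>A. \<bar>\<phi> x - Inf TT\<bar> \<le> e)"
proof -
  let ?l = "Inf TT"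
  have 1: "cls S I (spec_fam \<phi> (?l + e)) \<in> B" using obs_less[of "?l+e"] assms
    unfolding TT_def spec_fam_quot_def by simp
  have "cls S I (spec_fam \<phi> (?l - e)) \<notin> B" using obs_notin[of "?l-e"] assms
    unfolding TT_def spec_fam_quot_def by simp
  hence 2: "cls S I (- spec_fam \<phi> (?l - e)) \<in> B" using qp_ultra[OF qp] spec_fam_S[OF phi] by blast
  let ?A = "spec_fam \<phi> (?l + e) \<inter> - spec_fam \<phi> (?l - e)"
  have "cls S I ?A \<in> B" using qp_meet[OF qp 1 2] spec_fam_S[OF phi] by blast
  moreover have "?A \<in> S" using spec_fam_S[OF phi] by blast
  moreover have "\<forall>x\<in>?A. \<bar>\<phi> x - ?l\<bar> \<le> e" unfolding spec_fam_def by auto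
  ultimately show ?thesis by blast
qed

lemma obs_lt_iff: "Inf TT < a \<longleftrightarrow> (\<exists>t<a. cls S I (spec_fam \<phi> t) \<in> B)"
proof
  assume "Inf TT < a"
  then obtain t where "t \<in> TT" "t < a" using cInf_lessD[OF TT_ne] by blast
  thus "\<exists>t<a. cls S I (spec_fam \<phi> t) \<in> B" unfolding TT_def spec_fam_quot_def by blast
next
  assume "\<exists>t<a. cls S I (spec_fam \<phi> t) \<in> B"
  then obtain t where "t < a" "t \<in> TT" unfolding TT_def spec_fam_quot_def by blast
  thus "Inf TT < a" using obs_lower by force
qed

lemma obs_gt_iff: "a < Inf TT \<longleftrightarrow> (\<exists>t>a. cls S I (- spec_fam \<phi> t) \<in> B)"
proof
  assume h: "a < Inf TT"
  define t where "t = (a + Inf TT) / 2"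
  have "t > a" "t < Inf TT" using h unfolding t_def by auto
  hence "cls S I (spec_fam \<phi> t) \<notin> B" using obs_notin unfolding TT_def spec_fam_quot_def by blast
  hence "cls S I (- spec_fam \<phi> t) \<in> B" using qp_ultra[OF qp] spec_fam_S[OF phi] by blast
  thus "\<exists>t>a. cls S I (- spec_fam \<phi> t) \<in> B" using \<open>t > a\<close> by blast
next
  assume "\<exists>t>a. cls S I (- spec_fam \<phi> t) \<in> B"
  then obtain t where t: "t > a" "cls S I (- spec_fam \<phi> t) \<in> B" by blast
  have "t \<le> s" if "s \<in> TT" for s
  proof (rule ccontr)
    assume "\<not> t \<le> s"
    hence "t \<in> TT" using TT_up that by force
    hence "cls S I (spec_fam \<phi> t) \<in> B" unfolding TT_def spec_fam_quot_def by simp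
    moreover have "- spec_fam \<phi> t \<in> S" using spec_fam_S[OF phi] by blast
    ultimately show False using qp_compl[OF qp, of "- spec_fam \<phi> t"] t by simp
  qed
  hence "t \<le> Inf TT" using cInf_greatest[OF TT_ne] by blast
  thus "a < Inf TT" using t by simp
qed

end
end

lemma topspace_stone: "topspace (stone_quot S I) = {B. quasipoint_quot S I B}"
proof -
  have "\<exists>a\<in>qcarrier S I. a \<in> B" if "quasipoint_quot S I B" for B
  proof -
    have "cls S I UNIV \<in> B" using qp_univ[OF that] .
    moreover have "cls S I UNIV \<in> qcarrier S I" using qcarrier_iff SUNIV by blast
    ultimately show ?thesis by blast
  qed
  thus ?thesis unfolding stone_spectrum_def topology_generated_by_topspace by blast
qed

lemma openin_basic: "X \<in> qcarrier S I \<Longrightarrow> openin (stone_quot S I) {B. quasipoint_quot S I B \<and> X \<in> B}"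
  unfolding stone_spectrum_def by (rule topology_generated_by_Basis) blast

theorem part1: assumes phi: "\<phi> \<in> Fmeas S"
  shows "continuous_map (stone_quot S I) euclideanreal (obs_fun (spec_fam_quot S I \<phi>))"
  unfolding continuous_map_upper_lower_semicontinuous_lt
proof (intro conjI allI)
  fix a
  have "{x \<in> topspace (stone_quot S I). a < obs_fun (spec_fam_quot S I \<phi>) x}
     = (\<Union>t\<in>{a<..}. {B. quasipoint_quot S I B \<and> cls S I (- spec_fam \<phi> t) \<in> B})"
    unfolding topspace_stone using obs_gt_iff[OF _ phi] obs_eq[OF _ phi] by auto
  moreover have "openin (stone_quot S I) (\<Union>t\<in>{a<..}. {B. quasipoint_quot S I B \<and> cls S I (- spec_fam \<phi> t) \<in> B})"
    using openin_basic qcarrier_iff spec_fam_S[OF phi] Scompl by (intro openin_Union) blast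
  ultimately show "openin (stone_quot S I) {x \<in> topspace (stone_quot S I). a < obs_fun (spec_fam_quot S I \<phi>) x}"
    by simp
  have "{x \<in> topspace (stone_quot S I). obs_fun (spec_fam_quot S I \<phi>) x < a}
     = (\<Union>t\<in>{..<a}. {B. quasipoint_quot S I B \<and> cls S I (spec_fam \<phi> t) \<in> B})"
    unfolding topspace_stone using obs_lt_iff[OF _ phi] obs_eq[OF _ phi] by auto
  moreover have "openin (stone_quot S I) (\<Union>t\<in>{..<a}. {B. quasipoint_quot S I B \<and> cls S I (spec_fam \<phi> t) \<in> B})"
    using openin_basic qcarrier_iff spec_fam_S[OF phi] by (intro openin_Union) blast
  ultimately show "openin (stone_quot S I) {x \<in> topspace (stone_quot S I). obs_fun (spec_fam_quot S I \<phi>) x < a}"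
    by simp
qed

theorem part3: assumes qs: "quasipoint_set S B" and co: "\<forall>A\<in>I. UNIV - A \<in> B" and phi: "\<phi> \<in> Fmeas S"
  shows "obs_fun (spec_fam_quot S I \<phi>) (cls S I ` B) = obs_fun (spec_fam \<phi>) B"
proof -
  have di: "dual_ideal S (\<subseteq>) (\<inter>) {} B" using qs unfolding quasipoint_def by blast
  have BS: "B \<subseteq> S" and up: "\<And>a b. a \<in> B \<Longrightarrow> b \<in> S \<Longrightarrow> a \<subseteq> b \<Longrightarrow> b \<in> B"
    and mt: "\<And>a b. a \<in> B \<Longrightarrow> b \<in> B \<Longrightarrow> a \<inter> b \<in> B"
    using di unfolding dual_ideal_def by blast+
  have "spec_fam_quot S I \<phi> t \<in> cls S I ` B \<longleftrightarrow> spec_fam \<phi> t \<in> B" for t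
  proof
    assume "spec_fam_quot S I \<phi> t \<in> cls S I ` B"
    then obtain C where C: "C \<in> B" "cls S I (spec_fam \<phi> t) = cls S I C" unfolding spec_fam_quot_def by blast
    have CS: "C \<in> S" using C BS by blast
    have E: "spec_fam \<phi> t \<in> S" using spec_fam_S[OF phi] .
    have sd: "sym_diff (spec_fam \<phi> t) C \<in> I" using C cls_eq_iff[OF E CS] by simp
    have "UNIV - sym_diff (spec_fam \<phi> t) C \<in> B" using co sd by blast
    hence "C \<inter> (UNIV - sym_diff (spec_fam \<phi> t) C) \<in> B" using mt C by blast
    moreover have "C \<inter> (UNIV - sym_diff (spec_fam \<phi> t) C) \<subseteq> spec_fam \<phi> t" by blast
    ultimately show "spec_fam \<phi> t \<in> B" using up E by blast
  next
    assume "spec_fam \<phi> t \<in> B"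
    thus "spec_fam_quot S I \<phi> t \<in> cls S I ` B" unfolding spec_fam_quot_def by blast
  qed
  thus ?thesis unfolding obs_fun_def by simp
qed


lemma Fmeas_I: "f \<in> borel_measurable (sigma UNIV S) \<Longrightarrow> (\<And>x. norm (f x) \<le> K) \<Longrightarrow> f \<in> Fmeas S"
  unfolding Fmeas_iff bounded_iff by blast
lemma Fmeas_M: "f \<in> Fmeas S \<Longrightarrow> f \<in> borel_measurable (sigma UNIV S)"
  unfolding Fmeas_iff by blast

lemma Fmeas_add: fixes f g :: "'a \<Rightarrow> complex" assumes "f \<in> Fmeas S" "g \<in> Fmeas S" shows "(\<lambda>x. f x + g x) \<in> Fmeas S"
proof -
  obtain K1 where K1: "\<And>x. norm (f x) \<le> K1" using Fmeas_bound[OF assms(1)] by blast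
  obtain K2 where K2: "\<And>x. norm (g x) \<le> K2" using Fmeas_bound[OF assms(2)] by blast
  have [measurable]: "f \<in> borel_measurable (sigma UNIV S)" "g \<in> borel_measurable (sigma UNIV S)"
    using assms Fmeas_M by auto
  show ?thesis
  proof (rule Fmeas_I[where K="K1+K2"])
    fix x show "norm (f x + g x) \<le> K1 + K2" using K1[of x] K2[of x] norm_triangle_ineq[of "f x" "g x"] by simp
  qed measurable
qed

lemma Fmeas_mult: fixes f g :: "'a \<Rightarrow> complex"
  assumes "f \<in> Fmeas S" "g \<in> Fmeas S" shows "(\<lambda>x. f x * g x) \<in> Fmeas S"
proof -
  obtain K1 where K1: "K1 > 0" "\<And>x. norm (f x) \<le> K1" using Fmeas_bound[OF assms(1)] by blast
  obtain K2 where K2: "K2 > 0" "\<And>x. norm (g x) \<le> K2" using Fmeas_bound[OF assms(2)] by blast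
  have [measurable]: "f \<in> borel_measurable (sigma UNIV S)" "g \<in> borel_measurable (sigma UNIV S)"
    using assms Fmeas_M by auto
  show ?thesis
  proof (rule Fmeas_I[where K="K1*K2"])
    fix x show "norm (f x * g x) \<le> K1 * K2" unfolding norm_mult
      using K1 K2 by (simp add: mult_mono)
  qed measurable
qed

lemma Fmeas_const: "(\<lambda>x. c) \<in> Fmeas S"
  by (rule Fmeas_I[where K="norm c"]) auto

lemma Fmeas_ind: assumes "A \<in> S" shows "(\<lambda>x. complex_of_real (indicator A x)) \<in> Fmeas S"
proof -
  have [measurable]: "A \<in> sets (sigma UNIV S)" using assms by simp
  show ?thesis by (rule Fmeas_I[where K=1]) (auto simp: indicator_def)
qed

lemma Fmeas_ofreal: "\<phi> \<in> Fmeas S \<Longrightarrow> (\<lambda>x. complex_of_real (\<phi> x)) \<in> Fmeas S"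
proof -
  assume a: "\<phi> \<in> Fmeas S"
  obtain K where K: "\<And>x. norm (\<phi> x) \<le> K" using Fmeas_bound[OF a] by blast
  have [measurable]: "\<phi> \<in> borel_measurable (sigma UNIV S)" using a Fmeas_M by auto
  show ?thesis by (rule Fmeas_I[where K=K]) (use K in auto)
qed

lemma Fmeas_Re: "f \<in> Fmeas S \<Longrightarrow> (\<lambda>x. Re (f x)) \<in> Fmeas S"
proof -
  assume a: "f \<in> Fmeas S"
  obtain K where K: "\<And>x. norm (f x) \<le> K" using Fmeas_bound[OF a] by blast
  have [measurable]: "f \<in> borel_measurable (sigma UNIV S)" using a Fmeas_M by auto
  show ?thesis by (rule Fmeas_I[where K=K]) (use order_trans[OF abs_Re_le_cmod K] in auto)
qed

lemma Fmeas_Im: "f \<in> Fmeas S \<Longrightarrow> (\<lambda>x. Im (f x)) \<in> Fmeas S"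
proof -
  assume a: "f \<in> Fmeas S"
  obtain K where K: "\<And>x. norm (f x) \<le> K" using Fmeas_bound[OF a] by blast
  have [measurable]: "f \<in> borel_measurable (sigma UNIV S)" using a Fmeas_M by auto
  show ?thesis by (rule Fmeas_I[where K=K]) (use order_trans[OF abs_Im_le_cmod K] in auto)
qed

lemma fcls_self: "f \<in> Fmeas S \<Longrightarrow> f \<in> fcls S I f"
  unfolding fcls_def Fideal_def using Fmeas_const[of 0] I_empty by auto


context
  fixes B assumes qp: "quasipoint_quot S I B"
begin

definition ulim :: "('a \<Rightarrow> complex) \<Rightarrow> complex \<Rightarrow> bool" where
  "ulim f c \<longleftrightarrow> (\<forall>e>0. \<exists>A\<in>S. cls S I A \<in> B \<and> (\<forall>x\<in>A. norm (f x - c) \<le> e))"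

lemma ulim_unique: assumes "ulim f c" "ulim f d" shows "c = d"
proof (rule ccontr)
  assume ne: "c \<noteq> d"
  define e where "e = norm (c - d) / 3"
  have e: "e > 0" using ne unfolding e_def by simp
  obtain A1 where A1: "A1 \<in> S" "cls S I A1 \<in> B" "\<forall>x\<in>A1. norm (f x - c) \<le> e"
    using assms(1) e unfolding ulim_def by blast
  obtain A2 where A2: "A2 \<in> S" "cls S I A2 \<in> B" "\<forall>x\<in>A2. norm (f x - d) \<le> e"
    using assms(2) e unfolding ulim_def by blast
  have "cls S I (A1 \<inter> A2) \<in> B" using qp_meet[OF qp A1(2) A2(2) A1(1) A2(1)] .
  hence "A1 \<inter> A2 \<noteq> {}" using qp_ne[OF qp] A1 A2 by blast
  then obtain x where x: "x \<in> A1" "x \<in> A2" by blast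
  have "norm (c - d) \<le> norm (f x - c) + norm (f x - d)"
    using norm_triangle_ineq4[of "f x - d" "f x - c"] by (simp add: norm_minus_commute)
  also have "\<dots> \<le> 2 * e" using A1(3) A2(3) x by force
  finally show False using e unfolding e_def by simp
qed

lemma ulim_exists: assumes f: "f \<in> Fmeas S" shows "\<exists>c. ulim f c"
proof -
  let ?r = "\<lambda>x. Re (f x)" and ?i = "\<lambda>x. Im (f x)"
  have r: "?r \<in> Fmeas S" and i: "?i \<in> Fmeas S" using Fmeas_Re[OF f] Fmeas_Im[OF f] by auto
  define c where "c = Complex (Inf (TT B ?r)) (Inf (TT B ?i))"
  have "ulim f c" unfolding ulim_def
  proof (intro allI impI)
    fix e :: real assume e: "e > 0"
    obtain A1 where A1: "A1 \<in> S" "cls S I A1 \<in> B" "\<forall>x\<in>A1. \<bar>Re (f x) - Inf (TT B ?r)\<bar> \<le> e/2"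
      using obs_approx[OF qp r, of "e/2"] e by auto
    obtain A2 where A2: "A2 \<in> S" "cls S I A2 \<in> B" "\<forall>x\<in>A2. \<bar>Im (f x) - Inf (TT B ?i)\<bar> \<le> e/2"
      using obs_approx[OF qp i, of "e/2"] e by auto
    have "cls S I (A1 \<inter> A2) \<in> B" using qp_meet[OF qp A1(2) A2(2) A1(1) A2(1)] .
    moreover have "A1 \<inter> A2 \<in> S" using A1 A2 by blast
    moreover have "norm (f x - c) \<le> e" if "x \<in> A1 \<inter> A2" for x
    proof -
      have "norm (f x - c) \<le> \<bar>Re (f x - c)\<bar> + \<bar>Im (f x - c)\<bar>" by (rule cmod_le)
      also have "\<dots> \<le> e/2 + e/2" using A1(3) A2(3) that unfolding c_def by (intro add_mono) auto
      finally show ?thesis by simp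
    qed
    ultimately show "\<exists>A\<in>S. cls S I A \<in> B \<and> (\<forall>x\<in>A. norm (f x - c) \<le> e)" by blast
  qed
  thus ?thesis by blast
qed

lemma ulim_cong: assumes f: "f \<in> Fmeas S" and g: "g \<in> fcls S I f" and u: "ulim f c" shows "ulim g c"
  unfolding ulim_def
proof (intro allI impI)
  fix e :: real assume e: "e > 0"
  obtain N where N: "N \<in> I" "\<And>x. x \<notin> N \<Longrightarrow> g x - f x = 0"
    using g unfolding fcls_def Fideal_def by blast
  obtain A where A: "A \<in> S" "cls S I A \<in> B" "\<forall>x\<in>A. norm (f x - c) \<le> e"
    using u e unfolding ulim_def by blast
  have NS: "N \<in> S" using I_S N by blast
  have "sym_diff A (A - N) \<in> I" by (rule I_sub[OF N(1)]) (use A NS in auto)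
  hence "cls S I (A - N) = cls S I A" using A NS by (subst cls_eq_iff) (auto simp: Un_commute)
  moreover have "\<forall>x\<in>A - N. norm (g x - c) \<le> e" using A N by (metis DiffE eq_iff_diff_eq_0)
  ultimately show "\<exists>A\<in>S. cls S I A \<in> B \<and> (\<forall>x\<in>A. norm (g x - c) \<le> e)" using A NS by (metis SDiff)
qed

definition chB :: "('a \<Rightarrow> complex) set \<Rightarrow> complex" where
  "chB X = (THE c. ulim (SOME g. g \<in> X) c)"

lemma chB_eq: assumes f: "f \<in> Fmeas S" and u: "ulim f c" shows "chB (fcls S I f) = c"
proof -
  have "(SOME g. g \<in> fcls S I f) \<in> fcls S I f" by (rule someI[of "\<lambda>g. g \<in> fcls S I f" f, OF fcls_self[OF f]])
  hence "ulim (SOME g. g \<in> fcls S I f) c" using ulim_cong f u by blast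
  hence u': "ulim (SOME g. g \<in> fcls S I f) c" .
  show ?thesis unfolding chB_def
  proof (rule the_equality)
    show "ulim (SOME g. g \<in> fcls S I f) c" by (rule u')
    fix x assume "ulim (SOME g. g \<in> fcls S I f) x" thus "x = c" using ulim_unique[OF _ u'] by blast
  qed
qed

lemma ulim_add: assumes "ulim f c" "ulim g d" shows "ulim (\<lambda>x. f x + g x) (c + d)"
  unfolding ulim_def
proof (intro allI impI)
  fix e :: real assume e: "e > 0"
  obtain A1 where A1: "A1 \<in> S" "cls S I A1 \<in> B" "\<forall>x\<in>A1. norm (f x - c) \<le> e/2"
    using assms(1) e unfolding ulim_def by (meson half_gt_zero)
  obtain A2 where A2: "A2 \<in> S" "cls S I A2 \<in> B" "\<forall>x\<in>A2. norm (g x - d) \<le> e/2"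
    using assms(2) e unfolding ulim_def by (meson half_gt_zero)
  have "cls S I (A1 \<inter> A2) \<in> B" using qp_meet[OF qp A1(2) A2(2) A1(1) A2(1)] .
  moreover have "A1 \<inter> A2 \<in> S" using A1 A2 by blast
  moreover have "norm (f x + g x - (c + d)) \<le> e" if "x \<in> A1 \<inter> A2" for x
  proof -
    have "norm (f x + g x - (c + d)) \<le> norm (f x - c) + norm (g x - d)"
      by (metis add_diff_add norm_triangle_ineq)
    also have "\<dots> \<le> e/2 + e/2" using A1(3) A2(3) that by (intro add_mono) auto
    finally show ?thesis by simp
  qed
  ultimately show "\<exists>A\<in>S. cls S I A \<in> B \<and> (\<forall>x\<in>A. norm (f x + g x - (c + d)) \<le> e)" by blast
qed

lemma ulim_mult: assumes "ulim f c" "ulim g d" and K: "K > 0" "\<And>x. norm (f x) \<le> K"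
  shows "ulim (\<lambda>x. f x * g x) (c * d)"
  unfolding ulim_def
proof (intro allI impI)
  fix e :: real assume e: "e > 0"
  define e1 where "e1 = e / (2 * K)"
  define e2 where "e2 = e / (2 * (norm d + 1))"
  have e1: "e1 > 0" using e K unfolding e1_def by (auto intro: divide_pos_pos)
  have "2 * (norm d + 1) > 0" by (smt (verit) norm_ge_zero)
  hence e2: "e2 > 0" using e unfolding e2_def by (rule divide_pos_pos[rotated])
  obtain A1 where A1: "A1 \<in> S" "cls S I A1 \<in> B" "\<forall>x\<in>A1. norm (f x - c) \<le> e2"
    using assms(1) e2 unfolding ulim_def by blast
  obtain A2 where A2: "A2 \<in> S" "cls S I A2 \<in> B" "\<forall>x\<in>A2. norm (g x - d) \<le> e1"
    using assms(2) e1 unfolding ulim_def by blast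
  have "cls S I (A1 \<inter> A2) \<in> B" using qp_meet[OF qp A1(2) A2(2) A1(1) A2(1)] .
  moreover have "A1 \<inter> A2 \<in> S" using A1 A2 by blast
  moreover have "norm (f x * g x - c * d) \<le> e" if "x \<in> A1 \<inter> A2" for x
  proof -
    have "f x * g x - c * d = f x * (g x - d) + d * (f x - c)" by (simp add: algebra_simps)
    hence "norm (f x * g x - c * d) \<le> norm (f x) * norm (g x - d) + norm d * norm (f x - c)"
      by (metis norm_mult norm_triangle_ineq)
    also have "\<dots> \<le> K * e1 + (norm d + 1) * e2"
    proof (rule add_mono)
      show "norm (f x) * norm (g x - d) \<le> K * e1"
        by (rule mult_mono[OF K(2)]) (use A2(3) that K in auto)
      show "norm d * norm (f x - c) \<le> (norm d + 1) * e2"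
        by (rule mult_mono) (use A1(3) that e2 in auto)
    qed
    also have "K * e1 = e/2" unfolding e1_def using K by simp
    also have "(norm d + 1) * e2 = e/2" unfolding e2_def
      using \<open>2 * (norm d + 1) > 0\<close> by (simp add: field_simps)
    finally show ?thesis by simp
  qed
  ultimately show "\<exists>A\<in>S. cls S I A \<in> B \<and> (\<forall>x\<in>A. norm (f x * g x - c * d) \<le> e)" by blast
qed

lemma ulim_const: "ulim (\<lambda>x. a) a"
  unfolding ulim_def using qp_univ[OF qp] SUNIV by (auto intro!: bexI[of _ UNIV])

lemma ulim_ind: assumes A: "A \<in> S"
  shows "ulim (\<lambda>x. complex_of_real (indicator A x)) (if cls S I A \<in> B then 1 else 0)"
proof (cases "cls S I A \<in> B")
  case True
  thus ?thesis unfolding ulim_def using A by (auto intro!: bexI[of _ A])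
next
  case False
  hence "cls S I (-A) \<in> B" using qp_ultra[OF qp A] by blast
  thus ?thesis unfolding ulim_def using A False by (auto intro!: bexI[of _ "-A"])
qed

lemma chB_char: "quot_character S I chB"
  unfolding quot_character_def
proof (intro conjI ballI allI)
  fix f g :: "'a \<Rightarrow> complex" assume f: "f \<in> Fmeas S" and g: "g \<in> Fmeas S"
  obtain c where c: "ulim f c" using ulim_exists[OF f] by blast
  obtain d where d: "ulim g d" using ulim_exists[OF g] by blast
  obtain K where K: "K > 0" "\<And>x. norm (f x) \<le> K" using Fmeas_bound[OF f] by blast
  show "chB (fcls S I (\<lambda>x. f x + g x)) = chB (fcls S I f) + chB (fcls S I g)"
    using chB_eq[OF Fmeas_add[OF f g] ulim_add[OF c d]] chB_eq[OF f c] chB_eq[OF g d] by simp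
  show "chB (fcls S I (\<lambda>x. f x * g x)) = chB (fcls S I f) * chB (fcls S I g)"
    using chB_eq[OF Fmeas_mult[OF f g] ulim_mult[OF c d K]] chB_eq[OF f c] chB_eq[OF g d] by simp
next
  fix f :: "'a \<Rightarrow> complex" and a :: complex assume f: "f \<in> Fmeas S"
  obtain c where c: "ulim f c" using ulim_exists[OF f] by blast
  have "ulim (\<lambda>x. a * f x) (a * c)"
    using ulim_mult[OF ulim_const[of a] c, of "norm a + 1"] by (simp add: add_nonneg_pos)
  thus "chB (fcls S I (\<lambda>x. a * f x)) = a * chB (fcls S I f)"
    using chB_eq[OF Fmeas_mult[OF Fmeas_const f]] chB_eq[OF f c] by simp
next
  show "\<exists>f\<in>Fmeas S. chB (fcls S I f) \<noteq> 0"
    using chB_eq[OF Fmeas_const ulim_const, of 1] Fmeas_const[of 1]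
    by (intro bexI[of _ "\<lambda>x. 1"]) auto
qed

lemma chB_ind: "A \<in> S \<Longrightarrow> chB (fcls S I (\<lambda>x. of_real (indicator A x))) = (if cls S I A \<in> B then 1 else 0)"
  using chB_eq[OF Fmeas_ind ulim_ind] by blast


lemma part2b:
  assumes ch: "quot_character S I ch"
    and ind: "\<forall>A\<in>S. ch (fcls S I (\<lambda>x. of_real (indicator A x))) = (if cls S I A \<in> B then 1 else 0)"
    and phi: "\<phi> \<in> Fmeas S"
  shows "ch (fcls S I (\<lambda>x. complex_of_real (\<phi> x))) = complex_of_real (obs_fun (spec_fam_quot S I \<phi>) B)"
proof (rule ccontr)
  have add: "\<And>f g. f \<in> Fmeas S \<Longrightarrow> g \<in> Fmeas S \<Longrightarrow> ch (fcls S I (\<lambda>x. f x + g x)) = ch (fcls S I f) + ch (fcls S I g)"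
   and mul: "\<And>f g. f \<in> Fmeas S \<Longrightarrow> g \<in> Fmeas S \<Longrightarrow> ch (fcls S I (\<lambda>x. f x * g x)) = ch (fcls S I f) * ch (fcls S I g)"
   and scal: "\<And>f a. f \<in> Fmeas S \<Longrightarrow> ch (fcls S I (\<lambda>x. a * f x)) = a * ch (fcls S I f)"
    using ch unfolding quot_character_def by blast+
  define l where "l = Inf (TT B \<phi>)"
  have obs: "obs_fun (spec_fam_quot S I \<phi>) B = l" using obs_eq[OF qp phi] l_def by simp
  define c where "c = ch (fcls S I (\<lambda>x. complex_of_real (\<phi> x)))"
  assume "ch (fcls S I (\<lambda>x. complex_of_real (\<phi> x))) \<noteq> complex_of_real (obs_fun (spec_fam_quot S I \<phi>) B)"
  hence ne: "c \<noteq> of_real l" unfolding c_def obs by simp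
  define e where "e = norm (c - of_real l) / 2"
  have e: "e > 0" using ne unfolding e_def by simp
  obtain A where A: "A \<in> S" "cls S I A \<in> B" "\<forall>x\<in>A. \<bar>\<phi> x - l\<bar> \<le> e"
    using obs_approx[OF qp phi e] unfolding l_def by blast
  have one: "ch (fcls S I (\<lambda>x. 1)) = 1"
    using ind[rule_format, OF SUNIV] qp_univ[OF qp] by simp
  define iA where "iA = (\<lambda>x. complex_of_real (indicator A x))"
  define iN where "iN = (\<lambda>x. complex_of_real (indicator (-A) x))"
  have iA: "ch (fcls S I iA) = 1" "iA \<in> Fmeas S" using ind A unfolding iA_def by (auto intro: Fmeas_ind)
  have iN: "ch (fcls S I iN) = 0" "iN \<in> Fmeas S" using ind A qp_compl[OF qp A(2,1)] Scompl[OF A(1)]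
    unfolding iN_def by (auto intro: Fmeas_ind)
  define F1 where "F1 = (\<lambda>x. complex_of_real (\<phi> x))"
  define F2 where "F2 = (\<lambda>x::'a. - c)"
  have F1: "F1 \<in> Fmeas S" "ch (fcls S I F1) = c" unfolding F1_def c_def using Fmeas_ofreal[OF phi] by auto
  have F2: "F2 \<in> Fmeas S" "ch (fcls S I F2) = - c"
    using scal[OF Fmeas_const[of 1], of "-c"] one unfolding F2_def by (auto simp: Fmeas_const)
  define u where "u = (\<lambda>x. F1 x + F2 x)"
  have u: "u \<in> Fmeas S" "ch (fcls S I u) = 0" unfolding u_def using add[OF F1(1) F2(1)] F1 F2 Fmeas_add by auto
  define v where "v = (\<lambda>x. u x * iA x)"
  have v: "v \<in> Fmeas S" "ch (fcls S I v) = 0" unfolding v_def using mul[OF u(1) iA(2)] u iA Fmeas_mult by auto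
  define h where "h = (\<lambda>x. v x + iN x)"
  have h: "h \<in> Fmeas S" "ch (fcls S I h) = 0" unfolding h_def using add[OF v(1) iN(2)] v iN Fmeas_add by auto
  have ub: "norm (u x) \<ge> e" if "x \<in> A" for x
  proof -
    have "norm (c - of_real l) \<le> norm (u x) + norm (of_real (\<phi> x) - of_real l :: complex)"
      unfolding u_def F1_def F2_def using norm_triangle_ineq4[of "of_real (\<phi> x) - c" "of_real (\<phi> x) - of_real l"]
      by (simp add: norm_minus_commute)
    also have "norm (of_real (\<phi> x) - of_real l :: complex) = \<bar>\<phi> x - l\<bar>"
      by (metis norm_of_real of_real_diff)
    moreover have "\<bar>\<phi> x - l\<bar> \<le> e" using A(3) that by blast
    ultimately show ?thesis unfolding e_def by linarith
  qed
  define g where "g = (\<lambda>x. if x \<in> A then inverse (u x) else 1)"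
  have g: "g \<in> Fmeas S"
  proof (rule Fmeas_I[where K="max 1 (inverse e)"])
    have [measurable]: "u \<in> borel_measurable (sigma UNIV S)" using Fmeas_M[OF u(1)] .
    have [measurable]: "A \<in> sets (sigma UNIV S)" using A by simp
    show "g \<in> borel_measurable (sigma UNIV S)" unfolding g_def by measurable
    fix x show "norm (g x) \<le> max 1 (inverse e)"
    proof (cases "x \<in> A")
      case True
      have "norm (g x) = inverse (norm (u x))" using True unfolding g_def by (simp add: norm_inverse)
      also have "\<dots> \<le> inverse e" using ub[OF True] e by (simp add: le_imp_inverse_le)
      finally show ?thesis by simp
    qed (simp add: g_def)
  qed
  have "(\<lambda>x. h x * g x) = (\<lambda>x. 1)"
  proof
    fix x show "h x * g x = 1"
    proof (cases "x \<in> A")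
      case True
      hence "u x \<noteq> 0" using ub[OF True] e by auto
      thus ?thesis using True unfolding h_def v_def g_def iA_def iN_def by simp
    qed (simp add: h_def v_def g_def iA_def iN_def)
  qed
  hence "ch (fcls S I (\<lambda>x. 1)) = ch (fcls S I h) * ch (fcls S I g)" using mul[OF h(1) g] by simp
  thus False using one h by simp
qed

end

end
theorem theorem2p14:
  fixes S I :: "'a set set"
  assumes "sigma_algebra (UNIV::'a set) S"
      and "sigma_ideal S I"
  shows
    "(\<forall>\<phi>::'a \<Rightarrow> real. \<phi> \<in> Fmeas S \<longrightarrow>
        continuous_map (stone_quot S I) euclideanreal (obs_fun (spec_fam_quot S I \<phi>)))
   \<and> (\<forall>B. quasipoint_quot S I B \<longrightarrow>
        (\<exists>ch. quot_character S I ch \<and>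
              (\<forall>A\<in>S. ch (fcls S I (\<lambda>x. of_real (indicator A x)))
                        = (if cls S I A \<in> B then 1 else 0))) \<and>
        (\<forall>ch. quot_character S I ch \<and>
              (\<forall>A\<in>S. ch (fcls S I (\<lambda>x. of_real (indicator A x)))
                        = (if cls S I A \<in> B then 1 else 0)) \<longrightarrow>
           (\<forall>\<phi>::'a \<Rightarrow> real. \<phi> \<in> Fmeas S \<longrightarrow>
              ch (fcls S I (\<lambda>x. complex_of_real (\<phi> x)))
                = complex_of_real (obs_fun (spec_fam_quot S I \<phi>) B))))
   \<and> (\<forall>B. quasipoint_set S B \<and> (\<forall>A\<in>I. UNIV - A \<in> B) \<longrightarrow>
        (\<forall>\<phi>::'a \<Rightarrow> real. \<phi> \<in> Fmeas S \<longrightarrow>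
           obs_fun (spec_fam_quot S I \<phi>) (cls S I ` B) = obs_fun (spec_fam \<phi>) B))"
proof -
  interpret q: qsetup S I using assms by (rule qsetup.intro)
  show ?thesis
  proof (intro conjI allI impI)
    fix \<phi> :: "'a \<Rightarrow> real" assume "\<phi> \<in> Fmeas S"
    thus "continuous_map (stone_quot S I) euclideanreal (obs_fun (spec_fam_quot S I \<phi>))"
      by (rule q.part1)
  next
    fix B assume qp: "quasipoint_quot S I B"
    show "\<exists>ch. quot_character S I ch \<and>
              (\<forall>A\<in>S. ch (fcls S I (\<lambda>x. of_real (indicator A x)))
                        = (if cls S I A \<in> B then 1 else 0))"
      using q.chB_char[OF qp] q.chB_ind[OF qp] by blast
  next
    fix B ch and \<phi> :: "'a \<Rightarrow> real"
    assume qp: "quasipoint_quot S I B"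
      and h: "quot_character S I ch \<and>
              (\<forall>A\<in>S. ch (fcls S I (\<lambda>x. of_real (indicator A x)))
                        = (if cls S I A \<in> B then 1 else 0))"
      and phi: "\<phi> \<in> Fmeas S"
    thus "ch (fcls S I (\<lambda>x. complex_of_real (\<phi> x)))
                = complex_of_real (obs_fun (spec_fam_quot S I \<phi>) B)"
      using q.part2b[OF qp] by blast
  next
    fix B and \<phi> :: "'a \<Rightarrow> real"
    assume "quasipoint_set S B \<and> (\<forall>A\<in>I. UNIV - A \<in> B)" and "\<phi> \<in> Fmeas S"
    thus "obs_fun (spec_fam_quot S I \<phi>) (cls S I ` B) = obs_fun (spec_fam \<phi>) B"
      using q.part3 by blast
  qed
qed

end
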